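(* Let $n,k,r$ be integers with $k,r\geq 2$, $n\geq 2k$ and $k<r$. Then every vertex-$k$-maximal $r$-uniform hypergraph $H$ on $n$ vertices satisfies $|E(H)|=\binom{n}{r}-\binom{n-k}{r}$.
   Context: Binomial coefficients satisfy $\binom{a}{b}=0$ when $b>a$. A hypergraph $H=(V,E)$ consists of a finite vertex set $V$ and a set $E$ of non-empty subsets of $V$ (edges); it is $r$-uniform if all edges have exactly $r$ elements. The complement $H^c$ has as edges the $r$-subsets of $V$ not in $E$. A subhypergraph is $H'=(V',E')$ with $V'\subseteq V$, $E'\subseteq E$. $H+e=(V,E\cup\{e\})$ for $e\in E(H^c)$. $H-Y$ is the hypergraph induced on $V\setminus Y$ (keeping edges contained in $V\setminus Y$). Connectedness is defined via paths (alternating sequences of distinct vertices and distinct edges with consecutive vertices in the intermediate edge). A vertex-cut is a set $X$ with $H-X$ disconnected. $\kappa(H)$ is the minimum size of a vertex-cut if one exists, and $|V(H)|-1$ otherwise. $\overline{\kappa}(H)=\max\{\kappa(H'): H'\subseteq H\}$. An $r$-uniform hypergraph $H$ is vertex-$k$-maximal if $\overline{\kappa}(H)\leq k$ but $\overline{\kappa}(H+e)\geq k+1$ for every $e\in E(H^c)$. *)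

theory Defs
  imports Main
begin

type_synonym 'a hgraph = "'a set \<times> 'a set set"

definition verts :: "'a hgraph \<Rightarrow> 'a set" where "verts H = fst H"
definition edges :: "'a hgraph \<Rightarrow> 'a set set" where "edges H = snd H"

definition hypergraph :: "'a hgraph \<Rightarrow> bool" where
  "hypergraph H \<longleftrightarrow> finite (verts H) \<and> (\<forall>e\<in>edges H. e \<noteq> {} \<and> e \<subseteq> verts H)"

definition uniform :: "nat \<Rightarrow> 'a hgraph \<Rightarrow> bool" where
  "uniform r H \<longleftrightarrow> (\<forall>e\<in>edges H. card e = r)"

definition compl_edges :: "nat \<Rightarrow> 'a hgraph \<Rightarrow> 'a set set" where
  "compl_edges r H = {e. e \<subseteq> verts H \<and> card e = r} - edges H"

definition subhypergraph :: "'a hgraph \<Rightarrow> 'a hgraph \<Rightarrow> bool" where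
  "subhypergraph H' H \<longleftrightarrow> hypergraph H' \<and> verts H' \<subseteq> verts H \<and> edges H' \<subseteq> edges H"

definition add_edge :: "'a set \<Rightarrow> 'a hgraph \<Rightarrow> 'a hgraph" where
  "add_edge e H = (verts H, insert e (edges H))"

definition del_verts :: "'a hgraph \<Rightarrow> 'a set \<Rightarrow> 'a hgraph" where
  "del_verts H Y = (verts H - Y, {e \<in> edges H. e \<subseteq> verts H - Y})"

definition is_path :: "'a hgraph \<Rightarrow> 'a list \<Rightarrow> 'a set list \<Rightarrow> bool" where
  "is_path H vs es \<longleftrightarrow> length vs = Suc (length es) \<and> set vs \<subseteq> verts H \<and> set es \<subseteq> edges H
     \<and> distinct vs \<and> distinct es
     \<and> (\<forall>i < length es. vs ! i \<in> es ! i \<and> vs ! Suc i \<in> es ! i)"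

definition connected_hg :: "'a hgraph \<Rightarrow> bool" where
  "connected_hg H \<longleftrightarrow> (\<forall>u\<in>verts H. \<forall>w\<in>verts H.
      \<exists>vs es. is_path H vs es \<and> hd vs = u \<and> last vs = w)"

definition vertex_cut :: "'a hgraph \<Rightarrow> 'a set \<Rightarrow> bool" where
  "vertex_cut H X \<longleftrightarrow> X \<subseteq> verts H \<and> \<not> connected_hg (del_verts H X)"

definition kappa :: "'a hgraph \<Rightarrow> nat" where
  "kappa H = (if \<exists>X. vertex_cut H X then Min {card X | X. vertex_cut H X}
              else card (verts H) - 1)"

definition kappa_bar :: "'a hgraph \<Rightarrow> nat" where
  "kappa_bar H = Max {kappa H' | H'. subhypergraph H' H}"

definition vertex_k_maximal :: "nat \<Rightarrow> nat \<Rightarrow> 'a hgraph \<Rightarrow> bool" where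
  "vertex_k_maximal k r H \<longleftrightarrow> hypergraph H \<and> uniform r H \<and> kappa_bar H \<le> k \<and>
     (\<forall>e\<in>compl_edges r H. kappa_bar (add_edge e H) \<ge> k + 1)"

end

theory Submission
  imports Defs
begin


lemma verts_del[simp]: "verts (del_verts H Y) = verts H - Y" by (simp add: verts_def del_verts_def)
lemma edges_del[simp]: "edges (del_verts H Y) = {e\<in>edges H. e \<subseteq> verts H - Y}" by (simp add: edges_def del_verts_def)
lemma verts_add[simp]: "verts (add_edge e H) = verts H" by (simp add: verts_def add_edge_def)
lemma edges_add[simp]: "edges (add_edge e H) = insert e (edges H)" by (simp add: edges_def add_edge_def)

lemma path_single: "u \<in> verts G \<Longrightarrow> is_path G [u] []" by (simp add: is_path_def)

lemma path_take: assumes "is_path G vs es" "i \<le> length es"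
  shows "is_path G (take (Suc i) vs) (take i es)"
  using assms unfolding is_path_def
  by (auto dest: in_set_takeD)

lemma path_hd: "is_path G vs es \<Longrightarrow> vs \<noteq> []" by (auto simp: is_path_def)

lemma path_sep: assumes "is_path G vs es" "\<forall>f\<in>edges G. f \<subseteq> A \<or> f \<inter> A = {}" "hd vs \<in> A"
  shows "last vs \<in> A"
proof -
  have L: "length vs = Suc (length es)" using assms(1) by (simp add: is_path_def)
  have "\<forall>i. i \<le> length es \<longrightarrow> vs ! i \<in> A"
  proof
    fix i show "i \<le> length es \<longrightarrow> vs ! i \<in> A"
    proof (induction i)
      case 0 then show ?case using assms(3) L by (simp add: hd_conv_nth[symmetric] path_hd[OF assms(1)])
    next
      case (Suc i)
      show ?case
      proof
        assume "Suc i \<le> length es"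
        then have i: "i < length es" by simp
        then have "vs ! i \<in> A" using Suc by simp
        moreover have "es ! i \<in> edges G" "vs ! i \<in> es ! i" "vs ! Suc i \<in> es ! i"
          using assms(1) i by (auto simp: is_path_def)
        ultimately show "vs ! Suc i \<in> A" using assms(2) by blast
      qed
    qed
  qed
  then show ?thesis using L by (simp add: last_conv_nth path_hd[OF assms(1)])
qed

lemma not_conn: assumes "a \<in> verts G" "a \<in> A" "b \<in> verts G" "b \<notin> A"
  "\<forall>f\<in>edges G. f \<subseteq> A \<or> f \<inter> A = {}"
  shows "\<not> connected_hg G"
  using assms path_sep unfolding connected_hg_def by metis

lemma path_extend: assumes P: "is_path G vs es" and e: "e \<in> edges G" "last vs \<in> e" "y \<in> e" "y \<in> verts G"
  shows "\<exists>vs' es'. is_path G vs' es' \<and> hd vs' = hd vs \<and> last vs' = y"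
proof -
  have L: "length vs = Suc (length es)" and ne: "vs \<noteq> []" using P by (auto simp: is_path_def)
  have ex: "vs ! length es \<in> e" using e L ne by (simp add: last_conv_nth)
  define j where "j = (LEAST j. vs ! j \<in> e)"
  have j1: "vs ! j \<in> e" unfolding j_def by (rule LeastI[of "\<lambda>j. vs ! j \<in> e", OF ex])
  have j2: "j \<le> length es" unfolding j_def by (rule Least_le[of "\<lambda>j. vs ! j \<in> e", OF ex])
  have j3: "\<And>i. i < j \<Longrightarrow> vs ! i \<notin> e" unfolding j_def using not_less_Least by blast
  have Pj: "is_path G (take (Suc j) vs) (take j es)" by (rule path_take[OF P j2])
  have hdj: "hd (take (Suc j) vs) = hd vs" using ne by (simp add: hd_take)
  show ?thesis
  proof (cases "y \<in> set (take (Suc j) vs)")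
    case True
    then obtain i where i: "i < length (take (Suc j) vs)" "take (Suc j) vs ! i = y" by (auto simp: in_set_conv_nth)
    have ij: "i \<le> j" "i \<le> length es" using i j2 L by auto
    have "is_path G (take (Suc i) vs) (take i es)" by (rule path_take[OF P ij(2)])
    moreover have "hd (take (Suc i) vs) = hd vs" using ne by (simp add: hd_take)
    moreover have "last (take (Suc i) vs) = y" using i ij L by (simp add: last_conv_nth take_Suc_conv_app_nth)
    ultimately show ?thesis by blast
  next
    case False
    define vs' where "vs' = take (Suc j) vs @ [y]"
    define es' where "es' = take j es @ [e]"
    have enot: "e \<notin> set (take j es)"
    proof
      assume "e \<in> set (take j es)"
      then obtain i where i: "i < j" "es ! i = e" using j2 by (auto simp: in_set_conv_nth)
      have "vs ! i \<in> es ! i" using P i j2 by (auto simp: is_path_def)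
      then show False using j3 i by auto
    qed
    have lt: "length (take (Suc j) vs) = Suc j" "length (take j es) = j" using j2 L by auto
    have c5: "\<forall>i<length es'. vs' ! i \<in> es' ! i \<and> vs' ! Suc i \<in> es' ! i"
    proof (intro allI impI)
      fix i assume "i < length es'"
      then have i: "i \<le> j" using lt by (simp add: es'_def)
      show "vs' ! i \<in> es' ! i \<and> vs' ! Suc i \<in> es' ! i"
      proof (cases "i < j")
        case True
        then show ?thesis using P lt j2 by (simp add: vs'_def es'_def nth_append is_path_def)
      next
        case False
        then have "i = j" using i by simp
        then show ?thesis using lt j1 e(3) by (simp add: vs'_def es'_def nth_append)
      qed
    qed
    have "length vs' = Suc (length es')" using lt by (simp add: vs'_def es'_def)
    moreover have "set vs' \<subseteq> verts G" using P e(4) by (auto simp: vs'_def is_path_def dest: in_set_takeD)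
    moreover have "set es' \<subseteq> edges G" using P e(1) by (auto simp: es'_def is_path_def dest: in_set_takeD)
    moreover have "distinct vs'" using P False by (simp add: vs'_def is_path_def)
    moreover have "distinct es'" using P enot by (simp add: es'_def is_path_def)
    ultimately have "is_path G vs' es'" using c5 unfolding is_path_def by blast
    moreover have "hd vs' = hd vs" using hdj lt ne by (simp add: vs'_def hd_append)
    moreover have "last vs' = y" by (simp add: vs'_def)
    ultimately show ?thesis by blast
  qed
qed



lemma cut_card: assumes "finite (verts G)" "vertex_cut G Y" shows "card Y + 2 \<le> card (verts G)"
proof -
  have Y: "Y \<subseteq> verts G" and nc: "\<not> connected_hg (del_verts G Y)" using assms(2) by (auto simp: vertex_cut_def)
  then obtain u w where uw: "u \<in> verts G - Y" "w \<in> verts G - Y"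
     "\<not> (\<exists>vs es. is_path (del_verts G Y) vs es \<and> hd vs = u \<and> last vs = w)"
    unfolding connected_hg_def by auto
  have "u \<noteq> w" using uw path_single[of u "del_verts G Y"] by force
  then have "card {u, w} \<le> card (verts G - Y)" using uw assms(1) by (intro card_mono) auto
  then have "2 \<le> card (verts G) - card Y" using \<open>u \<noteq> w\<close> Y assms(1) by (simp add: card_Diff_subset finite_subset)
  then show ?thesis by simp
qed

lemma cut_set_fin: assumes "finite (verts G)" shows "finite {card X | X. vertex_cut G X}"
proof -
  have "{card X | X. vertex_cut G X} \<subseteq> {..card (verts G)}"
    using assms by (auto simp: vertex_cut_def intro: card_mono)
  then show ?thesis by (rule finite_subset) simp
qed

lemma kappa_le_cut: assumes "finite (verts G)" "vertex_cut G Y" shows "kappa G \<le> card Y"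
proof -
  have "kappa G = Min {card X | X. vertex_cut G X}" using assms(2) by (auto simp: kappa_def)
  also have "\<dots> \<le> card Y" using cut_set_fin[OF assms(1)] assms(2) by (intro Min_le) auto
  finally show ?thesis .
qed

lemma kappa_le_card: assumes "finite (verts G)" shows "kappa G \<le> card (verts G) - 1"
proof (cases "\<exists>X. vertex_cut G X")
  case True
  then obtain Y where Y: "vertex_cut G Y" by auto
  have "kappa G \<le> card Y" by (rule kappa_le_cut[OF assms Y])
  moreover have "card Y + 2 \<le> card (verts G)" by (rule cut_card[OF assms Y])
  ultimately show ?thesis by linarith
next
  case False then show ?thesis by (simp add: kappa_def)
qed

lemma kappa_cut_exists: assumes "finite (verts G)" "kappa G < card (verts G) - 1"
  shows "\<exists>Y. vertex_cut G Y \<and> card Y = kappa G"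
proof -
  have ex: "\<exists>X. vertex_cut G X" using assms(2) by (auto simp: kappa_def split: if_splits)
  then have "kappa G = Min {card X | X. vertex_cut G X}" by (simp add: kappa_def)
  moreover have "Min {card X | X. vertex_cut G X} \<in> {card X | X. vertex_cut G X}"
    using cut_set_fin[OF assms(1)] ex by (intro Min_in) auto
  ultimately show ?thesis by auto
qed

lemma sub_refl: "hypergraph G \<Longrightarrow> subhypergraph G G" by (simp add: subhypergraph_def)

lemma kb_fin: assumes "hypergraph G"
  shows "finite {kappa H' | H'. subhypergraph H' G}" "{kappa H' | H'. subhypergraph H' G} \<noteq> {}"
proof -
  have fin: "finite (verts G)" using assms by (simp add: hypergraph_def)
  have "{kappa H' | H'. subhypergraph H' G} \<subseteq> {..card (verts G)}"
  proof
    fix x assume "x \<in> {kappa H' | H'. subhypergraph H' G}"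
    then obtain H' where H': "subhypergraph H' G" "x = kappa H'" by auto
    have "finite (verts H')" "verts H' \<subseteq> verts G" using H' by (auto simp: subhypergraph_def hypergraph_def)
    then have "kappa H' \<le> card (verts H')" using kappa_le_card[of H'] by linarith
    also have "\<dots> \<le> card (verts G)" using card_mono[OF fin] \<open>verts H' \<subseteq> verts G\<close> by blast
    finally have "kappa H' \<le> card (verts G)" .
    then show "x \<in> {..card (verts G)}" using H' by simp
  qed
  then show "finite {kappa H' | H'. subhypergraph H' G}" by (rule finite_subset) simp
  show "{kappa H' | H'. subhypergraph H' G} \<noteq> {}" using sub_refl[OF assms] by blast
qed

lemma kb_ge: assumes "hypergraph G" "subhypergraph H' G" shows "kappa H' \<le> kappa_bar G"
proof -
  have "kappa H' \<in> {kappa H' | H'. subhypergraph H' G}" using assms(2) by blast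
  then show ?thesis unfolding kappa_bar_def using kb_fin[OF assms(1)] by (intro Max_ge)
qed

lemma kb_ex: assumes "hypergraph G" shows "\<exists>H'. subhypergraph H' G \<and> kappa H' = kappa_bar G"
proof -
  have "kappa_bar G \<in> {kappa H' | H'. subhypergraph H' G}"
    unfolding kappa_bar_def using kb_fin[OF assms] by (intro Max_in)
  then obtain H' where "subhypergraph H' G" "kappa_bar G = kappa H'" by blast
  then show ?thesis by metis
qed

lemma kb_le: "hypergraph G \<Longrightarrow> (\<And>H'. subhypergraph H' G \<Longrightarrow> kappa H' \<le> k) \<Longrightarrow> kappa_bar G \<le> k"
  using kb_ex by metis

lemma kappa_le_kb: "hypergraph G \<Longrightarrow> kappa G \<le> kappa_bar G"
  using kb_ge sub_refl by blast

lemma sub_trans: "subhypergraph H' H1 \<Longrightarrow> verts H1 \<subseteq> verts H \<Longrightarrow> edges H1 \<subseteq> edges H \<Longrightarrow> subhypergraph H' H"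
  by (auto simp: subhypergraph_def)



lemma two_elems: assumes "finite S" "2 \<le> card S" obtains u w where "u \<in> S" "w \<in> S" "u \<noteq> w"
proof -
  have "\<not> card S \<le> Suc 0" using assms(2) by simp
  then show ?thesis using card_le_Suc0_iff_eq[OF assms(1)] that by blast
qed

lemma cut_by_sep: assumes "Y \<subseteq> verts G" "a \<in> verts G - Y" "b \<in> verts G - Y" "a \<in> A" "b \<notin> A"
  "\<forall>f\<in>edges G. f \<subseteq> verts G - Y \<longrightarrow> f \<subseteq> A \<or> f \<inter> A = {}"
shows "vertex_cut G Y"
proof -
  have "\<not> connected_hg (del_verts G Y)"
    by (rule not_conn[of a "del_verts G Y" A b]) (use assms in auto)
  then show ?thesis using assms(1) by (simp add: vertex_cut_def)
qed

lemma small_kappa: assumes "finite (verts G)" "\<forall>f\<in>edges G. card f = r" "card (verts G) < k + r"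
  shows "kappa G \<le> k"
proof (cases "card (verts G) \<le> k + 1")
  case True then show ?thesis using kappa_le_card[OF assms(1)] by linarith
next
  case False
  have "k \<le> card (verts G)" using False by linarith
  then obtain X where X: "X \<subseteq> verts G" "card X = k" "finite X" by (rule obtain_subset_with_card_n)
  have cd: "card (verts G - X) = card (verts G) - k" using card_Diff_subset[OF X(3) X(1)] X(2) by simp
  have "2 \<le> card (verts G - X)" using cd False by linarith
  then obtain u w where uw: "u \<in> verts G - X" "w \<in> verts G - X" "u \<noteq> w"
    using two_elems[of "verts G - X"] assms(1) by blast
  have cl: "\<forall>f\<in>edges G. f \<subseteq> verts G - X \<longrightarrow> f \<subseteq> {u} \<or> f \<inter> {u} = {}"
  proof (intro ballI impI)
    fix f assume f: "f \<in> edges G" "f \<subseteq> verts G - X"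
    have "card f \<le> card (verts G - X)" using f assms(1) by (intro card_mono) auto
    moreover have "card f = r" using assms(2) f by blast
    ultimately have False using cd assms(3) \<open>k \<le> card (verts G)\<close> by arith
    then show "f \<subseteq> {u} \<or> f \<inter> {u} = {}" by blast
  qed
  have "vertex_cut G X" by (rule cut_by_sep[OF X(1) uw(1) uw(2) _ _ cl]) (use uw(3) in auto)
  then have "kappa G \<le> card X" by (rule kappa_le_cut[OF assms(1)])
  then show ?thesis using X by simp
qed

lemma key: assumes H: "hypergraph H" and X: "X \<subseteq> verts H" and AB: "A \<inter> B = {}" "A \<union> B = verts H - X"
  and sep: "\<forall>f\<in>edges H. f \<subseteq> verts H - X \<longrightarrow> f \<subseteq> A \<or> f \<subseteq> B"
  and sub: "subhypergraph H' (add_edge e H)"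
  and Y: "Y \<subseteq> verts H'" "verts H' \<inter> X \<subseteq> Y"
  and a: "a \<in> verts H' - Y" "a \<in> A" and b: "b \<in> verts H' - Y" "b \<in> B"
  and ec: "e \<in> edges H' \<Longrightarrow> e \<subseteq> verts H' - Y \<Longrightarrow> e \<subseteq> A \<or> e \<subseteq> B"
shows "vertex_cut H' Y"
proof (rule cut_by_sep[OF Y(1) a(1) b(1) a(2)])
  show "b \<notin> A" using b AB by auto
  show "\<forall>f\<in>edges H'. f \<subseteq> verts H' - Y \<longrightarrow> f \<subseteq> A \<or> f \<inter> A = {}"
  proof (intro ballI impI)
    fix f assume f: "f \<in> edges H'" "f \<subseteq> verts H' - Y"
    have "f \<subseteq> A \<or> f \<subseteq> B"
    proof (cases "f = e")
      case True then show ?thesis using ec f by simp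
    next
      case False
      then have fH: "f \<in> edges H" using f sub by (auto simp: subhypergraph_def)
      then have "f \<subseteq> verts H" using H by (auto simp: hypergraph_def)
      moreover have "f \<inter> X = {}" using f Y sub by (auto simp: subhypergraph_def)
      ultimately show ?thesis using sep fH by blast
    qed
    then show "f \<subseteq> A \<or> f \<inter> A = {}" using AB by blast
  qed
qed

definition Rs :: "nat \<Rightarrow> 'a set \<Rightarrow> 'a set set" where "Rs r U = {e. e \<subseteq> U \<and> card e = r}"
definition Fs :: "nat \<Rightarrow> 'a set \<Rightarrow> 'a set \<Rightarrow> 'a set set" where "Fs r U X = {e. e \<subseteq> U \<and> card e = r \<and> e \<inter> X \<noteq> {}}"

lemma card_Rs: "finite U \<Longrightarrow> card (Rs r U) = (card U choose r)"
  unfolding Rs_def by (rule n_subsets)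

lemma fin_Rs: "finite U \<Longrightarrow> finite (Rs r U)"
  unfolding Rs_def by (rule finite_subset[of _ "Pow U"]) auto

lemma card_Fs: assumes "finite U" "X \<subseteq> U"
  shows "card (Fs r U X) = (card U choose r) - ((card U - card X) choose r)"
proof -
  have "Fs r U X = Rs r U - Rs r (U - X)" unfolding Fs_def Rs_def by auto
  moreover have "Rs r (U - X) \<subseteq> Rs r U" unfolding Rs_def by auto
  ultimately have "card (Fs r U X) = card (Rs r U) - card (Rs r (U - X))"
    using fin_Rs[OF assms(1)] by (simp add: card_Diff_subset finite_subset)
  also have "\<dots> = (card U choose r) - ((card U - card X) choose r)"
    using assms by (simp add: card_Rs card_Diff_subset finite_subset)
  finally show ?thesis .
qed



lemma vkm_D: assumes "vertex_k_maximal k r H"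
  shows "hypergraph H" "uniform r H" "kappa_bar H \<le> k" "\<And>e. e \<in> compl_edges r H \<Longrightarrow> k + 1 \<le> kappa_bar (add_edge e H)"
  using assms by (auto simp: vertex_k_maximal_def)

lemma hyp_add: assumes "hypergraph H" "e \<subseteq> verts H" "e \<noteq> {}" shows "hypergraph (add_edge e H)"
  using assms by (auto simp: hypergraph_def)

lemma get_H': assumes km: "vertex_k_maximal k r H" and e: "e \<in> compl_edges r H" and r: "0 < r"
  shows "\<exists>H'. subhypergraph H' (add_edge e H) \<and> k + 1 \<le> kappa H' \<and> e \<in> edges H' \<and> e \<subseteq> verts H'
     \<and> verts H' \<subseteq> verts H \<and> finite (verts H') \<and> edges H' \<subseteq> insert e (edges H)"
proof -
  have H: "hypergraph H" using vkm_D[OF km] by simp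
  have eV: "e \<subseteq> verts H" "card e = r" "e \<notin> edges H" using e by (auto simp: compl_edges_def)
  have "e \<noteq> {}" using eV(2) r by auto
  then have hA: "hypergraph (add_edge e H)" using hyp_add[OF H eV(1)] by simp
  obtain H' where H': "subhypergraph H' (add_edge e H)" "kappa H' = kappa_bar (add_edge e H)"
    using kb_ex[OF hA] by blast
  have kk: "k + 1 \<le> kappa H'" using H' vkm_D(4)[OF km e] by simp
  have sub: "verts H' \<subseteq> verts H" "edges H' \<subseteq> insert e (edges H)" "hypergraph H'"
    using H' by (auto simp: subhypergraph_def)
  have fin: "finite (verts H')" using sub(3) by (simp add: hypergraph_def)
  have eH: "e \<in> edges H'"
  proof (rule ccontr)
    assume "e \<notin> edges H'"
    then have "subhypergraph H' H" using sub by (auto simp: subhypergraph_def)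
    then have "kappa H' \<le> kappa_bar H" by (rule kb_ge[OF H])
    then show False using kk vkm_D(3)[OF km] by linarith
  qed
  have "e \<subseteq> verts H'" using eH sub(3) by (auto simp: hypergraph_def)
  then show ?thesis using H' kk eH sub fin by blast
qed

lemma side: assumes km: "vertex_k_maximal k r H" and kr: "k < r"
  and X: "X \<subseteq> verts H" "card X \<le> k" and AB: "A \<inter> B = {}" "A \<union> B = verts H - X"
  and sep: "\<forall>f\<in>edges H. f \<subseteq> verts H - X \<longrightarrow> f \<subseteq> A \<or> f \<subseteq> B"
shows "vertex_k_maximal k r (del_verts H B)"
proof -
  note D = vkm_D[OF km]
  have H: "hypergraph H" by (rule D(1))
  have finV: "finite (verts H)" using H by (simp add: hypergraph_def)
  have finX: "finite X" using finV X(1) by (rule finite_subset[rotated])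
  define H1 where "H1 = del_verts H B"
  have h1: "hypergraph H1" using H unfolding H1_def hypergraph_def by auto
  have u1: "uniform r H1" using D(2) unfolding H1_def uniform_def by auto
  have kb1: "kappa_bar H1 \<le> k"
  proof (rule kb_le[OF h1])
    fix H' assume "subhypergraph H' H1"
    then have "subhypergraph H' H" by (rule sub_trans) (auto simp: H1_def)
    then show "kappa H' \<le> k" using kb_ge[OF H] D(3) by fastforce
  qed
  have mx1: "k + 1 \<le> kappa_bar (add_edge e H1)" if e1: "e \<in> compl_edges r H1" for e
  proof -
    have e1': "e \<subseteq> verts H - B" "card e = r" "e \<notin> edges H1" using e1 by (auto simp: compl_edges_def H1_def)
    have eH: "e \<notin> edges H" using e1' by (auto simp: H1_def)
    have eC: "e \<in> compl_edges r H" using e1' eH by (auto simp: compl_edges_def)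
    have ne: "e \<noteq> {}" using e1'(2) kr by auto
    have hA1: "hypergraph (add_edge e H1)" using hyp_add[OF h1 _ ne] e1'(1) by (simp add: H1_def)
    obtain H' where H': "subhypergraph H' (add_edge e H)" "k + 1 \<le> kappa H'" "e \<in> edges H'" "e \<subseteq> verts H'"
       "verts H' \<subseteq> verts H" "finite (verts H')" "edges H' \<subseteq> insert e (edges H)"
      using get_H'[OF km eC] kr by auto
    have noB: "verts H' \<inter> B = {}"
    proof (rule ccontr)
      assume "verts H' \<inter> B \<noteq> {}"
      then obtain b where b: "b \<in> verts H'" "b \<in> B" by blast
      have "\<not> e \<subseteq> X"
      proof
        assume "e \<subseteq> X"
        then have "card e \<le> card X" using finX by (rule card_mono[rotated])
        then show False using e1'(2) X(2) kr by linarith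
      qed
      then obtain a where a: "a \<in> e" "a \<notin> X" by blast
      have aA: "a \<in> A" using a e1'(1) AB by blast
      define Y where "Y = verts H' \<inter> X"
      have "vertex_cut H' Y"
      proof (rule key[OF H X(1) AB sep H'(1)])
        show "Y \<subseteq> verts H'" "verts H' \<inter> X \<subseteq> Y" by (auto simp: Y_def)
        show "a \<in> verts H' - Y" using a H'(4) by (auto simp: Y_def)
        show "a \<in> A" by (rule aA)
        show "b \<in> verts H' - Y" using b AB by (auto simp: Y_def)
        show "b \<in> B" by (rule b(2))
        show "e \<subseteq> A \<or> e \<subseteq> B" if "e \<in> edges H'" "e \<subseteq> verts H' - Y"
          using that e1'(1) AB by (auto simp: Y_def)
      qed
      then have "kappa H' \<le> card Y" by (rule kappa_le_cut[OF H'(6)])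
      also have "card Y \<le> card X" unfolding Y_def using finX by (intro card_mono) auto
      finally show False using X(2) H'(2) by linarith
    qed
    have hH': "hypergraph H'" using H'(1) by (simp add: subhypergraph_def)
    have "subhypergraph H' (add_edge e H1)"
      unfolding subhypergraph_def
    proof (intro conjI)
      show "hypergraph H'" by (rule hH')
      show "verts H' \<subseteq> verts (add_edge e H1)" using H'(5) noB by (auto simp: H1_def)
      show "edges H' \<subseteq> edges (add_edge e H1)"
      proof
        fix f assume f: "f \<in> edges H'"
        have "f \<subseteq> verts H'" using f hH' by (auto simp: hypergraph_def)
        then have "f \<subseteq> verts H - B" using H'(5) noB by auto
        then show "f \<in> edges (add_edge e H1)" using f H'(7) by (auto simp: H1_def)
      qed
    qed
    then have "kappa H' \<le> kappa_bar (add_edge e H1)" by (rule kb_ge[OF hA1])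
    then show ?thesis using H'(2) by linarith
  qed
  show ?thesis unfolding vertex_k_maximal_def H1_def[symmetric] using h1 u1 kb1 mx1 by blast
qed



lemma main: assumes k1: "1 \<le> k" and kr: "k < r"
  shows "vertex_k_maximal k r H \<Longrightarrow> card (edges H) = (card (verts H) choose r) - ((card (verts H) - k) choose r)"
proof (induction "card (verts H)" arbitrary: H rule: less_induct)
  case less
  note km = less.prems
  note IH = less.hyps
  note D = vkm_D[OF km]
  have H: "hypergraph H" by (rule D(1))
  define V where "V = verts H"
  define m where "m = card V"
  have finV: "finite V" using H by (simp add: hypergraph_def V_def)
  have EV: "edges H \<subseteq> Rs r V" using H D(2) by (auto simp: hypergraph_def uniform_def Rs_def V_def)
  have finE: "finite (edges H)" using EV fin_Rs[OF finV] by (rule finite_subset)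
  show ?case
  proof (cases "m < k + r")
    case True
    have compl: "compl_edges r H = {}"
    proof (rule ccontr)
      assume "compl_edges r H \<noteq> {}"
      then obtain e where e: "e \<in> compl_edges r H" by blast
      have eV: "e \<subseteq> V" "card e = r" using e by (auto simp: compl_edges_def V_def)
      have ne: "e \<noteq> {}" using eV(2) kr by auto
      have hA: "hypergraph (add_edge e H)" using hyp_add[OF H _ ne] eV(1) by (simp add: V_def)
      have "kappa_bar (add_edge e H) \<le> k"
      proof (rule kb_le[OF hA])
        fix H' assume sub: "subhypergraph H' (add_edge e H)"
        have s: "verts H' \<subseteq> V" "edges H' \<subseteq> insert e (edges H)" "finite (verts H')"
          using sub by (auto simp: subhypergraph_def V_def hypergraph_def)
        have "card (verts H') \<le> m" unfolding m_def using s finV by (intro card_mono)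
        then have c: "card (verts H') < k + r" using True by linarith
        have fr: "\<forall>f\<in>edges H'. card f = r" using s(2) eV(2) D(2) by (auto simp: uniform_def)
        show "kappa H' \<le> k" by (rule small_kappa[OF s(3) fr c])
      qed
      then show False using D(4)[OF e] by linarith
    qed
    have "edges H = Rs r V"
    proof
      show "edges H \<subseteq> Rs r V" by (rule EV)
      show "Rs r V \<subseteq> edges H" using compl by (auto simp: compl_edges_def Rs_def V_def)
    qed
    then have "card (edges H) = m choose r" using card_Rs[OF finV] by (simp add: m_def)
    moreover have "(m - k) choose r = 0" by (intro binomial_eq_0) (use True kr in arith)
    ultimately show ?thesis unfolding m_def V_def by (simp del: binomial_eq_0_iff)
  next
    case False
    have kH: "kappa H \<le> k" using kappa_le_kb[OF H] D(3) by linarith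
    have "kappa H < card (verts H) - 1" using kH False kr k1 unfolding m_def V_def by arith
    then obtain X where X: "vertex_cut H X" "card X = kappa H" using kappa_cut_exists[OF finV[unfolded V_def]] by blast
    have XV: "X \<subseteq> V" using X by (simp add: vertex_cut_def V_def)
    have finX: "finite X" using finV XV by (rule finite_subset[rotated])
    have cX: "card X \<le> k" using X kH by simp
    define G where "G = del_verts H X"
    have "\<not> connected_hg G" using X by (simp add: vertex_cut_def G_def)
    then obtain u w where uw: "u \<in> V - X" "w \<in> V - X"
       "\<not> (\<exists>vs es. is_path G vs es \<and> hd vs = u \<and> last vs = w)"
      unfolding connected_hg_def G_def V_def by auto
    define A where "A = {y \<in> V - X. \<exists>vs es. is_path G vs es \<and> hd vs = u \<and> last vs = y}"
    define B where "B = (V - X) - A"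
    have uA: "u \<in> A" unfolding A_def using uw(1) path_single[of u G] by (force simp: G_def V_def)
    have wB: "w \<in> B" unfolding B_def A_def using uw by auto
    have AB: "A \<inter> B = {}" "A \<union> B = verts H - X" unfolding A_def B_def V_def by auto
    have sep: "\<forall>f\<in>edges H. f \<subseteq> verts H - X \<longrightarrow> f \<subseteq> A \<or> f \<subseteq> B"
    proof (intro ballI impI)
      fix f assume f: "f \<in> edges H" "f \<subseteq> verts H - X"
      show "f \<subseteq> A \<or> f \<subseteq> B"
      proof (cases "f \<inter> A = {}")
        case True then show ?thesis using f by (auto simp: B_def V_def)
      next
        case False
        then obtain x where x: "x \<in> f" "x \<in> A" by blast
        then obtain vs es where p: "is_path G vs es" "hd vs = u" "last vs = x" unfolding A_def by blast
        have fG: "f \<in> edges G" using f by (simp add: G_def)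
        have "f \<subseteq> A"
        proof
          fix y assume y: "y \<in> f"
          have yG: "y \<in> verts G" using y f by (auto simp: G_def)
          obtain vs' es' where "is_path G vs' es'" "hd vs' = u" "last vs' = y"
            using path_extend[OF p(1) fG _ y yG] p x by metis
          then show "y \<in> A" using yG unfolding A_def by (auto simp: G_def V_def)
        qed
        then show ?thesis by blast
      qed
    qed
    have XV': "X \<subseteq> verts H" using XV by (simp add: V_def)
    have r0: "0 < r" using kr by simp
    have cXk: "card X = k"
    proof (rule ccontr)
      assume "card X \<noteq> k"
      then have cXl: "card X < k" using cX by simp
      have cW: "card (V - X) = m - card X" using card_Diff_subset[OF finX XV] by (simp add: m_def)
      have uw': "u \<noteq> w" "u \<in> A" "w \<in> B" "u \<notin> B" "w \<notin> A" using uA wB AB by auto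
      have c2: "card (V - X - {u, w}) = card (V - X) - 2"
        using uw uw'(1) finV by (simp add: card_Diff_subset)
      have "r - 2 \<le> card (V - X - {u, w})" using c2 cW False cXl by linarith
      then obtain Z where Z: "Z \<subseteq> V - X - {u, w}" "card Z = r - 2" "finite Z"
        by (rule obtain_subset_with_card_n)
      define e where "e = insert u (insert w Z)"
      have uZ: "u \<notin> Z" "w \<notin> Z" using Z(1) by auto
      have "card e = Suc (Suc (card Z))" using uZ uw'(1) Z(3) by (simp add: e_def)
      then have ce: "card e = r" using Z(2) k1 kr by arith
      have eW: "e \<subseteq> V - X" using Z uw by (auto simp: e_def)
      have enot: "e \<notin> edges H"
      proof
        assume "e \<in> edges H"
        then have "e \<subseteq> A \<or> e \<subseteq> B" using sep eW by (simp add: V_def)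
        then show False using uw' by (auto simp: e_def)
      qed
      have eC: "e \<in> compl_edges r H" using eW ce enot by (auto simp: compl_edges_def V_def)
      obtain H' where H': "subhypergraph H' (add_edge e H)" "k + 1 \<le> kappa H'" "e \<in> edges H'" "e \<subseteq> verts H'"
         "verts H' \<subseteq> verts H" "finite (verts H')" "edges H' \<subseteq> insert e (edges H)"
        using get_H'[OF km eC r0] by auto
      have uV': "u \<in> verts H'" "w \<in> verts H'" using H'(4) by (auto simp: e_def)
      define Y0 where "Y0 = verts H' \<inter> X"
      have finY0: "finite Y0" unfolding Y0_def using finX by simp
      have cY0: "card Y0 \<le> card X" unfolding Y0_def using finX by (intro card_mono) auto
      have ec_triv: "\<And>Y. u \<in> Y \<or> w \<in> Y \<Longrightarrow> e \<subseteq> verts H' - Y \<Longrightarrow> e \<subseteq> A \<or> e \<subseteq> B"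
        by (auto simp: e_def)
      show False
      proof (cases "\<exists>a\<in>verts H' \<inter> A. a \<noteq> u")
        case True
        then obtain a where a: "a \<in> verts H'" "a \<in> A" "a \<noteq> u" by blast
        have "vertex_cut H' (insert u Y0)"
        proof (rule key[OF H XV' AB sep H'(1)])
          show "insert u Y0 \<subseteq> verts H'" "verts H' \<inter> X \<subseteq> insert u Y0" using uV' by (auto simp: Y0_def)
          show "a \<in> verts H' - insert u Y0" using a AB by (auto simp: Y0_def)
          show "a \<in> A" by (rule a(2))
          show "w \<in> verts H' - insert u Y0" using uV' uw' AB by (auto simp: Y0_def)
          show "w \<in> B" by (rule uw'(3))
          show "e \<subseteq> A \<or> e \<subseteq> B" if "e \<in> edges H'" "e \<subseteq> verts H' - insert u Y0"
            using ec_triv that by blast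
        qed
        then have "kappa H' \<le> card (insert u Y0)" by (rule kappa_le_cut[OF H'(6)])
        also have "\<dots> \<le> card Y0 + 1" using finY0 by (simp add: card_insert_if)
        finally show False using cY0 cXl H'(2) by linarith
      next
        case F1: False
        show False
        proof (cases "\<exists>b\<in>verts H' \<inter> B. b \<noteq> w")
          case True
          then obtain b where b: "b \<in> verts H'" "b \<in> B" "b \<noteq> w" by blast
          have "vertex_cut H' (insert w Y0)"
          proof (rule key[OF H XV' AB sep H'(1)])
            show "insert w Y0 \<subseteq> verts H'" "verts H' \<inter> X \<subseteq> insert w Y0" using uV' by (auto simp: Y0_def)
            show "u \<in> verts H' - insert w Y0" using uV' uw' AB by (auto simp: Y0_def)
            show "u \<in> A" by (rule uw'(2))
            show "b \<in> verts H' - insert w Y0" using b AB by (auto simp: Y0_def)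
            show "b \<in> B" by (rule b(2))
            show "e \<subseteq> A \<or> e \<subseteq> B" if "e \<in> edges H'" "e \<subseteq> verts H' - insert w Y0"
              using ec_triv that by blast
          qed
          then have "kappa H' \<le> card (insert w Y0)" by (rule kappa_le_cut[OF H'(6)])
          also have "\<dots> \<le> card Y0 + 1" using finY0 by (simp add: card_insert_if)
          finally show False using cY0 cXl H'(2) by linarith
        next
          case F2: False
          have "verts H' \<subseteq> insert u (insert w Y0)"
          proof
            fix x assume x: "x \<in> verts H'"
            then have "x \<in> X \<or> x \<in> A \<or> x \<in> B" using H'(5) AB by auto
            then show "x \<in> insert u (insert w Y0)" using x F1 F2 by (auto simp: Y0_def)
          qed
          then have "card (verts H') \<le> card (insert u (insert w Y0))"
            using finX by (intro card_mono) (auto simp: Y0_def)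
          also have "\<dots> \<le> card Y0 + 2" using finY0 by (simp add: card_insert_if)
          finally have "card (verts H') \<le> card Y0 + 2" .
          then show False using kappa_le_card[OF H'(6)] cY0 cXl H'(2) by linarith
        qed
      qed
    qed
    have m1: "vertex_k_maximal k r (del_verts H B)" by (rule side[OF km kr XV' cX AB sep])
    have AB': "B \<inter> A = {}" "B \<union> A = verts H - X" using AB by auto
    have sep': "\<forall>f\<in>edges H. f \<subseteq> verts H - X \<longrightarrow> f \<subseteq> B \<or> f \<subseteq> A" using sep by blast
    have m2: "vertex_k_maximal k r (del_verts H A)" by (rule side[OF km kr XV' cX AB' sep'])
    have BV: "B \<subseteq> V" "A \<subseteq> V" by (auto simp: A_def B_def)
    have "card (V - B) < card V" using wB BV finV by (intro psubset_card_mono) auto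
    then have lt1: "card (verts (del_verts H B)) < card (verts H)" by (simp add: V_def)
    have "card (V - A) < card V" using uA BV finV by (intro psubset_card_mono) auto
    then have lt2: "card (verts (del_verts H A)) < card (verts H)" by (simp add: V_def)
    define E1 where "E1 = edges (del_verts H B)"
    define E2 where "E2 = edges (del_verts H A)"
    have cE1: "card E1 = (card (V - B) choose r) - ((card (V - B) - k) choose r)"
      using IH[OF lt1 m1] by (simp add: V_def E1_def)
    have cE2: "card E2 = (card (V - A) choose r) - ((card (V - A) - k) choose r)"
      using IH[OF lt2 m2] by (simp add: V_def E2_def)
    define Cr where "Cr = {f. f \<subseteq> V \<and> card f = r \<and> f \<inter> A \<noteq> {} \<and> f \<inter> B \<noteq> {} \<and> f \<inter> X \<noteq> {}}"
    have CrE: "Cr \<subseteq> edges H"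
    proof
      fix f assume f: "f \<in> Cr"
      show "f \<in> edges H"
      proof (rule ccontr)
        assume nf: "f \<notin> edges H"
        have fC: "f \<in> compl_edges r H" using f nf by (auto simp: Cr_def compl_edges_def V_def)
        obtain H' where H': "subhypergraph H' (add_edge f H)" "k + 1 \<le> kappa H'" "f \<in> edges H'" "f \<subseteq> verts H'"
           "verts H' \<subseteq> verts H" "finite (verts H')" "edges H' \<subseteq> insert f (edges H)"
          using get_H'[OF km fC r0] by auto
        obtain a b x where abx: "a \<in> f" "a \<in> A" "b \<in> f" "b \<in> B" "x \<in> f" "x \<in> X"
          using f unfolding Cr_def by blast
        define Y where "Y = verts H' \<inter> X"
        have "vertex_cut H' Y"
        proof (rule key[OF H XV' AB sep H'(1)])
          show "Y \<subseteq> verts H'" "verts H' \<inter> X \<subseteq> Y" by (auto simp: Y_def)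
          show "a \<in> verts H' - Y" using abx H'(4) AB by (auto simp: Y_def)
          show "a \<in> A" by (rule abx(2))
          show "b \<in> verts H' - Y" using abx H'(4) AB by (auto simp: Y_def)
          show "b \<in> B" by (rule abx(4))
          show "f \<subseteq> A \<or> f \<subseteq> B" if "f \<in> edges H'" "f \<subseteq> verts H' - Y"
            using that abx H'(4) by (auto simp: Y_def)
        qed
        then have "kappa H' \<le> card Y" by (rule kappa_le_cut[OF H'(6)])
        also have "card Y \<le> card X" unfolding Y_def using finX by (intro card_mono) auto
        finally show False using cX H'(2) by linarith
      qed
    qed
    have noX: "f \<subseteq> V - B \<Longrightarrow> f \<subseteq> V - A \<Longrightarrow> card f = r \<Longrightarrow> False" for f
    proof -
      assume f: "f \<subseteq> V - B" "f \<subseteq> V - A" "card f = r"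
      have "f \<subseteq> X" using f AB by (auto simp: V_def)
      then have "card f \<le> card X" using finX by (rule card_mono[rotated])
      then show False using f(3) cX kr by linarith
    qed
    have finP: "finite (Pow V)" using finV by simp
    have E1s: "E1 = {e \<in> edges H. e \<subseteq> V - B}" "E2 = {e \<in> edges H. e \<subseteq> V - A}"
      by (simp_all add: E1_def E2_def V_def)
    have EHV: "\<And>f. f \<in> edges H \<Longrightarrow> f \<subseteq> V \<and> card f = r" using EV by (auto simp: Rs_def)
    have Edec: "edges H = (E1 \<union> E2) \<union> Cr"
    proof
      show "edges H \<subseteq> (E1 \<union> E2) \<union> Cr"
      proof
        fix f assume f: "f \<in> edges H"
        have fV: "f \<subseteq> V" "card f = r" using EHV[OF f] by auto
        show "f \<in> (E1 \<union> E2) \<union> Cr"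
        proof (cases "f \<inter> B = {} \<or> f \<inter> A = {}")
          case True then show ?thesis using f fV by (auto simp: E1s)
        next
          case False
          have "f \<inter> X \<noteq> {}"
          proof
            assume "f \<inter> X = {}"
            then have "f \<subseteq> verts H - X" using fV by (auto simp: V_def)
            then have "f \<subseteq> A \<or> f \<subseteq> B" using sep f by blast
            then show False using False AB by blast
          qed
          then show ?thesis using False fV by (auto simp: Cr_def)
        qed
      qed
      show "(E1 \<union> E2) \<union> Cr \<subseteq> edges H" using CrE by (auto simp: E1s)
    qed
    have Fdec: "Fs r V X = (Fs r (V - B) X \<union> Fs r (V - A) X) \<union> Cr"
    proof
      show "Fs r V X \<subseteq> (Fs r (V - B) X \<union> Fs r (V - A) X) \<union> Cr"
        by (auto simp: Fs_def Cr_def)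
      show "(Fs r (V - B) X \<union> Fs r (V - A) X) \<union> Cr \<subseteq> Fs r V X"
        by (auto simp: Fs_def Cr_def)
    qed
    have finE1: "finite E1" "finite E2" "finite Cr" "finite (Fs r (V - B) X)" "finite (Fs r (V - A) X)"
      using finP by (auto simp: E1s Cr_def Fs_def intro: finite_subset[OF _ finP] dest: EHV)
    have d1: "E1 \<inter> E2 = {}" using noX EHV by (auto simp: E1s)
    have d2: "(E1 \<union> E2) \<inter> Cr = {}" by (auto simp: E1s Cr_def)
    have d3: "Fs r (V - B) X \<inter> Fs r (V - A) X = {}" using noX by (auto simp: Fs_def)
    have d4: "(Fs r (V - B) X \<union> Fs r (V - A) X) \<inter> Cr = {}" by (auto simp: Fs_def Cr_def)
    have "card (edges H) = card E1 + card E2 + card Cr"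
      unfolding Edec using finE1 d1 d2 by (simp add: card_Un_disjoint)
    moreover have "card (Fs r V X) = card (Fs r (V - B) X) + card (Fs r (V - A) X) + card Cr"
      unfolding Fdec using finE1 d3 d4 by (simp add: card_Un_disjoint)
    moreover have "card (Fs r (V - B) X) = card E1"
      using card_Fs[of "V - B" X r] finV XV AB cXk cE1 by (auto simp: V_def)
    moreover have "card (Fs r (V - A) X) = card E2"
      using card_Fs[of "V - A" X r] finV XV AB cXk cE2 by (auto simp: V_def)
    moreover have "card (Fs r V X) = (m choose r) - ((m - k) choose r)"
      using card_Fs[OF finV XV] cXk by (simp add: m_def)
    ultimately show ?thesis by (simp add: m_def V_def)
  qed
qed


theorem corollary4p3:
  fixes n k r :: nat and H :: "'a hgraph"
  assumes "k \<ge> 2" and "r \<ge> 2" and "n \<ge> 2 * k" and "k < r"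
    and "hypergraph H" and "uniform r H" and "card (verts H) = n"
    and "vertex_k_maximal k r H"
  shows "card (edges H) = (n choose r) - ((n - k) choose r)"
  using main[of k r H] assms by simp

end
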